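(* Let $i\ge1$, $n=4i$, and let $C$ be a ceiling coalition of the $i$-bit roof game $G_{i\text{-bit}}$ on players $\{1,\dots,n\}$ such that $C$ has at least two distinct direct left-shifts. Let $p\in C$ be a player with $p\ge2$ and $p-1\notin C$ (so that $(C\setminus\{p\})\cup\{p-1\}$ is a direct left-shift of $C$), and let $a$ be such that $p$ is the $a$-th smallest element of $C$. Then $p=2a$.
   Context: Players are $N=\{1,\dots,n\}$ with $n=4i$. A coalition $S'$ is a direct left-shift of $S$ if there is $m\in S$, $2\le m\le n$, $m-1\notin S$, with $S'=(S\setminus\{m\})\cup\{m-1\}$; a left-shift of $S$ is obtained by one or more successive direct left-shifts. For $k\in\{0,1,\dots,2^i-1\}$ with $i$-bit binary representation $b_1b_2\cdots b_i$ ($b_1$ most significant), the $(k,i)$-encoding coalition is $S_{k,i}=\bigcup_{j=1}^{i}B_j$ where $B_j=\{4(j-1)+2,4(j-1)+3\}$ if $b_j=0$ and $B_j=\{4(j-1)+1,4(j-1)+4\}$ if $b_j=1$ (e.g. $S_{2,2}=\{1,4,6,7\}$). The $i$-bit roof game $G_{i\text{-bit}}$ is the simple game on $N$ in which a coalition is winning iff it contains some $S_{k,i}$ or some left-shift of some $S_{k,i}$; it is a canonical linear game whose roof coalitions (minimal winning coalitions all of whose left-shifts... equivalently all of whose right-shifts are losing) are exactly the $S_{k,i}$. A maximal losing coalition is a losing coalition $S$ such that $S\cup\{m\}$ is winning for all $m\notin S$; a ceiling coalition is a maximal losing coalition all of whose left-shifts are winning. *)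

theory Defs
  imports Main
begin

definition direct_left_shift :: "nat \<Rightarrow> nat set \<Rightarrow> nat set \<Rightarrow> bool" where
  "direct_left_shift n S S' \<longleftrightarrow>
     (\<exists>m\<in>S. 2 \<le> m \<and> m \<le> n \<and> m - 1 \<notin> S \<and> S' = insert (m - 1) (S - {m}))"

definition left_shift :: "nat \<Rightarrow> nat set \<Rightarrow> nat set \<Rightarrow> bool" where
  "left_shift n = (direct_left_shift n)\<^sup>+\<^sup>+"

(* bit j (j = 1..i, j = 1 most significant) of the i-bit representation of k *)
definition bit_of :: "nat \<Rightarrow> nat \<Rightarrow> nat \<Rightarrow> nat" where
  "bit_of i k j = (k div 2 ^ (i - j)) mod 2"

definition enc_block :: "nat \<Rightarrow> nat \<Rightarrow> nat \<Rightarrow> nat set" where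
  "enc_block i k j = (if bit_of i k j = 0
       then {4 * (j - 1) + 2, 4 * (j - 1) + 3}
       else {4 * (j - 1) + 1, 4 * (j - 1) + 4})"

definition enc_coalition :: "nat \<Rightarrow> nat \<Rightarrow> nat set" where
  "enc_coalition i k = (\<Union>j\<in>{1..i}. enc_block i k j)"

definition roof_winning :: "nat \<Rightarrow> nat set \<Rightarrow> bool" where
  "roof_winning i S \<longleftrightarrow> S \<subseteq> {1..4 * i} \<and>
     (\<exists>k < 2 ^ i. \<exists>T. (T = enc_coalition i k \<or> left_shift (4 * i) (enc_coalition i k) T) \<and> T \<subseteq> S)"

definition max_losing :: "nat \<Rightarrow> nat set \<Rightarrow> bool" where
  "max_losing i S \<longleftrightarrow> S \<subseteq> {1..4 * i} \<and> \<not> roof_winning i S \<and>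
     (\<forall>m \<in> {1..4 * i} - S. roof_winning i (insert m S))"

definition ceiling :: "nat \<Rightarrow> nat set \<Rightarrow> bool" where
  "ceiling i S \<longleftrightarrow> max_losing i S \<and>
     (\<forall>S'. left_shift (4 * i) S S' \<longrightarrow> roof_winning i S')"

end

theory Submission
  imports Defs
begin

definition cnt :: "nat set \<Rightarrow> nat \<Rightarrow> nat" where
  "cnt S y = card {s\<in>S. s \<le> y}"

lemma cnt_pred:
  assumes "finite S" "y \<ge> 1"
  shows "cnt S y = cnt S (y - 1) + (if y \<in> S then 1 else 0)"
proof (cases "y \<in> S")
  case True
  have "{s\<in>S. s \<le> y} = insert y {s\<in>S. s \<le> y - 1}" using True assms by auto
  moreover have "y \<notin> {s\<in>S. s \<le> y - 1}" using assms by auto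
  ultimately show ?thesis using True assms by (simp add: cnt_def)
next
  case False
  have "x \<le> y - 1" if "x \<in> S" "x \<le> y" for x
  proof -
    have "x \<noteq> y" using that False by auto
    then show ?thesis using that by linarith
  qed
  then have "{s\<in>S. s \<le> y} = {s\<in>S. s \<le> y - 1}" using False assms by auto
  then show ?thesis using False by (simp add: cnt_def)
qed

lemma cnt_shift:
  assumes "finite S" "m \<in> S" "m \<ge> 1" "m - 1 \<notin> S"
  shows "cnt (insert (m - 1) (S - {m})) y = cnt S y + (if y = m - 1 then 1 else 0)"
proof -
  consider "y < m - 1" | "y = m - 1" | "y \<ge> m" by linarith
  then show ?thesis
  proof cases
    case 1
    then have "{s\<in>insert (m - 1) (S - {m}). s \<le> y} = {s\<in>S. s \<le> y}" by auto
    then show ?thesis using 1 by (simp add: cnt_def)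
  next
    case 2
    then have "{s\<in>insert (m - 1) (S - {m}). s \<le> y} = insert (m-1) {s\<in>S. s \<le> y}"
      using assms by auto
    moreover have "m - 1 \<notin> {s\<in>S. s \<le> y}" using assms by auto
    ultimately show ?thesis using 2 assms by (simp add: cnt_def)
  next
    case 3
    then have e: "{s\<in>insert (m - 1) (S - {m}). s \<le> y} = insert (m-1) ({s\<in>S. s \<le> y} - {m})"
      using assms by auto
    have "m - 1 \<notin> {s\<in>S. s \<le> y} - {m}" using assms by auto
    moreover have "m \<in> {s\<in>S. s \<le> y}" using assms 3 by auto
    moreover have "finite {s\<in>S. s \<le> y}" using assms by auto
    ultimately have "card (insert (m-1) ({s\<in>S. s \<le> y} - {m})) = Suc (card ({s\<in>S. s \<le> y} - {m}))"
      by simp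
    also have "\<dots> = Suc (card {s\<in>S. s \<le> y} - 1)"
      using \<open>m \<in> {s\<in>S. s \<le> y}\<close> \<open>finite {s\<in>S. s \<le> y}\<close> by (simp add: card_Diff_singleton)
    also have "\<dots> = card {s\<in>S. s \<le> y}"
      using \<open>m \<in> {s\<in>S. s \<le> y}\<close> \<open>finite {s\<in>S. s \<le> y}\<close> card_gt_0_iff[of "{s\<in>S. s \<le> y}"] by auto
    finally have "card (insert (m-1) ({s\<in>S. s \<le> y} - {m})) = card {s\<in>S. s \<le> y}" .
    then show ?thesis using 3 assms e by (simp add: cnt_def)
  qed
qed

lemma dls_mono:
  assumes "direct_left_shift n S S'" "finite S"
  shows "finite S' \<and> (\<forall>y. cnt S y \<le> cnt S' y)"
proof -
  obtain m where m: "m \<in> S" "2 \<le> m" "m - 1 \<notin> S" "S' = insert (m - 1) (S - {m})"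
    using assms(1) unfolding direct_left_shift_def by blast
  show ?thesis using cnt_shift[of S m] m assms(2) by auto
qed

lemma ls_mono:
  assumes "left_shift n S S'" "finite S"
  shows "finite S' \<and> (\<forall>y. cnt S y \<le> cnt S' y)"
  using assms(1) unfolding left_shift_def
proof (induction rule: tranclp_induct)
  case (base y)
  then show ?case using dls_mono assms(2) by blast
next
  case (step y z)
  then show ?case using dls_mono by (meson order_trans)
qed

lemma reach:
  fixes n :: nat
  shows "finite A \<Longrightarrow> A \<subseteq> {1..n} \<Longrightarrow> finite S \<Longrightarrow> 0 \<notin> S \<Longrightarrow> (\<forall>y. cnt A y \<le> cnt S y)
    \<Longrightarrow> \<exists>T\<subseteq>S. T = A \<or> left_shift n A T"
proof (induction "\<Sum>A" arbitrary: A rule: less_induct)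
  case less
  show ?case
  proof (cases "A \<subseteq> S")
    case True
    then show ?thesis by blast
  next
    case False
    then obtain z where z: "z \<in> A" "z \<notin> S" by blast
    have z1: "z \<ge> 1" using z less.prems(2) by auto
    define P where "P a = (a \<in> A \<and> cnt A (a - 1) < cnt S (a - 1))" for a
    have "cnt A z = cnt A (z - 1) + 1" using cnt_pred[OF less.prems(1) z1] z by simp
    moreover have "cnt S z = cnt S (z - 1)" using cnt_pred[OF less.prems(3) z1] z by simp
    moreover have "cnt A z \<le> cnt S z" using less.prems(5) by blast
    ultimately have Pz: "P z" using z unfolding P_def by linarith
    define m where "m = (LEAST a. P a)"
    have Pm: "P m" using Pz m_def by (metis LeastI)
    have "{s\<in>S. s \<le> 0} = {}" using less.prems(4) by auto
    then have S0: "cnt S 0 = 0" unfolding cnt_def by simp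
    have m2: "m \<ge> 2"
    proof (rule ccontr)
      assume "\<not> m \<ge> 2"
      then have "m - 1 = 0" by simp
      then show False using Pm S0 unfolding P_def by simp
    qed
    have mA: "m \<in> A" using Pm P_def by simp
    have mn: "m \<le> n" using mA less.prems(2) by auto
    have m1: "m - 1 \<notin> A"
    proof
      assume a: "m - 1 \<in> A"
      have "cnt A (m - 1) = cnt A (m - 1 - 1) + 1" using cnt_pred[OF less.prems(1), of "m-1"] a m2 by simp
      moreover have "cnt S (m - 1) \<le> cnt S (m - 1 - 1) + 1" using cnt_pred[OF less.prems(3), of "m-1"] m2 by simp
      ultimately have "P (m - 1)" using Pm a unfolding P_def by simp
      then have "m \<le> m - 1" using m_def by (simp add: Least_le)
      then show False using m2 by simp
    qed
    define A1 where "A1 = insert (m - 1) (A - {m})"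
    have dls: "direct_left_shift n A A1" unfolding direct_left_shift_def A1_def
      using mA m2 mn m1 by blast
    have cA1: "cnt A1 y = cnt A y + (if y = m - 1 then 1 else 0)" for y
      using cnt_shift[OF less.prems(1) mA _ m1] m2 A1_def by simp
    have le1: "\<forall>y. cnt A1 y \<le> cnt S y"
    proof
      fix y
      show "cnt A1 y \<le> cnt S y"
      proof (cases "y = m - 1")
        case True
        then show ?thesis using cA1[of y] Pm unfolding P_def by simp
      next
        case False
        then show ?thesis using cA1[of y] less.prems(5) by simp
      qed
    qed
    have fA1: "finite A1" using A1_def less.prems(1) by simp
    have sA1: "A1 \<subseteq> {1..n}" using A1_def less.prems(2) m2 mn by auto
    have "\<Sum>A1 = (m - 1) + \<Sum>(A - {m})" using A1_def m1 less.prems(1) by simp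
    also have "\<Sum>(A - {m}) = \<Sum>A - m" using less.prems(1) mA by (simp add: sum_diff1_nat)
    finally have e1: "\<Sum>A1 = (m - 1) + (\<Sum>A - m)" .
    have "m \<le> \<Sum>A" using member_le_sum[of m A "\<lambda>x. x"] mA less.prems(1) by auto
    then have "\<Sum>A1 < \<Sum>A" using e1 m2 by linarith
    then obtain T where T: "T \<subseteq> S" "T = A1 \<or> left_shift n A1 T"
      using less.hyps[OF _ fA1 sA1 less.prems(3,4) le1] by blast
    then have "left_shift n A T" using dls unfolding left_shift_def
      by (metis tranclp.r_into_trancl tranclp_into_tranclp2)
    then show ?thesis using T by blast
  qed
qed

definition blk :: "bool \<Rightarrow> nat \<Rightarrow> nat set" where
  "blk z j = (if z then {4 * (j - 1) + 2, 4 * (j - 1) + 3} else {4 * (j - 1) + 1, 4 * (j - 1) + 4})"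

definition EE :: "(nat \<Rightarrow> bool) \<Rightarrow> nat \<Rightarrow> nat set" where
  "EE b i = (\<Union>j\<in>{1..i}. blk (b j) j)"

lemma enc_EE: "enc_coalition i k = EE (\<lambda>j. bit_of i k j = 0) i"
  unfolding enc_coalition_def EE_def enc_block_def blk_def by simp

lemma EE_sub: "EE b i \<subseteq> {1..4*i}"
  unfolding EE_def blk_def by (auto split: if_splits)

lemma EE_Suc: "EE b (Suc i) = EE b i \<union> blk (b (Suc i)) (Suc i)"
  unfolding EE_def by (auto simp: atLeastAtMostSuc_conv)

lemma EE_formula:
  "y \<le> 4 * i \<Longrightarrow> cnt (EE b i) y = y div 2 + (if odd y \<and> y \<in> EE b i then 1 else 0)"
proof (induction i arbitrary: y)
  case 0
  then show ?case by (simp add: EE_def cnt_def)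
next
  case (Suc i)
  have sub: "EE b i \<subseteq> {1..4*i}" by (rule EE_sub)
  have bs: "blk (b (Suc i)) (Suc i) \<subseteq> {4*i+1..4*i+4}" unfolding blk_def by auto
  show ?case
  proof (cases "y \<le> 4 * i")
    case True
    have "{s\<in>EE b (Suc i). s \<le> y} = {s\<in>EE b i. s \<le> y}" using True bs EE_Suc by auto
    moreover have "(y \<in> EE b (Suc i)) = (y \<in> EE b i)" using True bs EE_Suc by auto
    ultimately show ?thesis using Suc.IH[OF True] by (simp add: cnt_def)
  next
    case False
    have "cnt (EE b i) (4*i) = 2 * i" using Suc.IH[of "4*i"] by simp
    moreover have "{s\<in>EE b i. s \<le> 4*i} = EE b i" using sub by auto
    ultimately have cE: "card (EE b i) = 2 * i" by (simp add: cnt_def)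
    have e: "{s\<in>EE b (Suc i). s \<le> y} = EE b i \<union> {s\<in>blk (b (Suc i)) (Suc i). s \<le> y}"
      using False sub EE_Suc by auto
    have d0: "EE b i \<inter> blk (b (Suc i)) (Suc i) = {}"
    proof (rule ccontr)
      assume "EE b i \<inter> blk (b (Suc i)) (Suc i) \<noteq> {}"
      then obtain x where "x \<in> EE b i" "x \<in> blk (b (Suc i)) (Suc i)" by blast
      then have "x \<le> 4*i" "x \<ge> 4*i+1" using sub bs by auto
      then show False by simp
    qed
    have d: "EE b i \<inter> {s\<in>blk (b (Suc i)) (Suc i). s \<le> y} = {}" using d0 by auto
    have fE: "finite (EE b i)" using sub finite_subset by blast
    have c: "cnt (EE b (Suc i)) y = 2 * i + card {s\<in>blk (b (Suc i)) (Suc i). s \<le> y}"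
      unfolding cnt_def e using card_Un_disjoint[OF fE _ d] cE by (simp add: blk_def)
    have mem: "(y \<in> EE b (Suc i)) = (y \<in> blk (b (Suc i)) (Suc i))" using False sub EE_Suc by auto
    define r where "r = y - 4 * i"
    have r: "y = 4 * i + r" "1 \<le> r" "r \<le> 4" using False Suc.prems unfolding r_def by auto
    have "r = 1 \<or> r = 2 \<or> r = 3 \<or> r = 4" using r by auto
    have f2: "{s\<in>{u,v}. s \<le> y} = (if u \<le> y then {u} else {}) \<union> (if v \<le> y then {v} else {})" for u v y :: nat
      by auto
    have f3: "{s. (s = u \<or> s = v) \<and> P s} = (if P u then {u} else {}) \<union> (if P v then {v} else {})" for u v :: nat and P
      by auto
    have bl: "blk (b (Suc i)) (Suc i) = (if b (Suc i) then {4*i+2, 4*i+3} else {4*i+1, 4*i+4})"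
      by (simp add: blk_def)
    have ss: "(4*i+1) div 2 = 2*i" "(4*i+2) div 2 = 2*i+1" "(4*i+3) div 2 = 2*i+1" "(4*i+4) div 2 = 2*i+2"
      "odd (4*i+1)" "\<not> odd (4*i+2)" "odd (4*i+3)" "\<not> odd (4*i+4)" by presburger+
    consider "y = 4*i+1" | "y = 4*i+2" | "y = 4*i+3" | "y = 4*i+4" using r by linarith
    then show ?thesis
    proof cases
      case 1 then show ?thesis unfolding c mem using ss by (cases "b (Suc i)") (auto simp: blk_def f2 f3)
    next
      case 2 then show ?thesis unfolding c mem using ss by (cases "b (Suc i)") (auto simp: blk_def f2 f3)
    next
      case 3 then show ?thesis unfolding c mem using ss by (cases "b (Suc i)") (auto simp: blk_def f2 f3)
    next
      case 4 then show ?thesis unfolding c mem using ss by (cases "b (Suc i)") (auto simp: blk_def f2 f3)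
    qed
  qed
qed

lemma enc_sub: "enc_coalition i k \<subseteq> {1..4*i}"
  unfolding enc_EE by (rule EE_sub)

lemma enc_fin: "finite (enc_coalition i k)"
  using enc_sub finite_subset by blast

lemma enc_formula:
  "y \<le> 4 * i \<Longrightarrow> cnt (enc_coalition i k) y = y div 2 + (if odd y \<and> y \<in> enc_coalition i k then 1 else 0)"
  unfolding enc_EE by (rule EE_formula)

lemma W1:
  assumes "roof_winning i S"
  shows "\<exists>k<2^i. \<forall>y. cnt (enc_coalition i k) y \<le> cnt S y"
proof -
  have fS: "finite S" using assms unfolding roof_winning_def using finite_subset by blast
  obtain k T where k: "k < 2^i" "T = enc_coalition i k \<or> left_shift (4 * i) (enc_coalition i k) T" "T \<subseteq> S"
    using assms unfolding roof_winning_def by blast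
  have "cnt T y \<le> cnt S y" for y
    unfolding cnt_def using k(3) fS by (intro card_mono) auto
  moreover have "cnt (enc_coalition i k) y \<le> cnt T y" for y
    using k(2) ls_mono[OF _ enc_fin] by auto
  ultimately show ?thesis using k(1) le_trans by blast
qed

lemma W2:
  assumes "S \<subseteq> {1..4*i}" "k < 2^i" "\<forall>y. cnt (enc_coalition i k) y \<le> cnt S y"
  shows "roof_winning i S"
proof -
  have "finite S" using assms(1) finite_subset by blast
  moreover have "0 \<notin> S" using assms(1) by auto
  ultimately obtain T where "T \<subseteq> S" "T = enc_coalition i k \<or> left_shift (4 * i) (enc_coalition i k) T"
    using reach[OF enc_fin enc_sub _ _ assms(3)] by blast
  then show ?thesis unfolding roof_winning_def using assms by blast
qed

theorem lemma2:
  fixes i p a :: nat and C :: "nat set"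
  assumes "i \<ge> 1"
    and "ceiling i C"
    and "\<exists>S1 S2. S1 \<noteq> S2 \<and> direct_left_shift (4 * i) C S1 \<and> direct_left_shift (4 * i) C S2"
    and "p \<in> C" and "p \<ge> 2" and "p - 1 \<notin> C"
    and "a = card {x \<in> C. x \<le> p}"
  shows "p = 2 * a"
proof -
  have Csub: "C \<subseteq> {1..4*i}" and nw: "\<not> roof_winning i C"
    using assms(2) unfolding ceiling_def max_losing_def by auto
  have dw: "roof_winning i S'" if "direct_left_shift (4 * i) C S'" for S'
  proof -
    have "left_shift (4 * i) C S'" unfolding left_shift_def using that by (rule tranclp.r_into_trancl)
    then show ?thesis using assms(2) unfolding ceiling_def by blast
  qed
  have fin: "finite C" using Csub finite_subset by blast
  have p4: "p \<le> 4 * i" using assms(4) Csub by auto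
  define Cp where "Cp = insert (p - 1) (C - {p})"
  have dlsp: "direct_left_shift (4 * i) C Cp" unfolding direct_left_shift_def Cp_def
    using assms(4,5,6) p4 by blast
  obtain S1 S2 where S12: "S1 \<noteq> S2" "direct_left_shift (4 * i) C S1" "direct_left_shift (4 * i) C S2"
    using assms(3) by blast
  obtain S' where S': "direct_left_shift (4 * i) C S'" "S' \<noteq> Cp"
  proof (cases "S1 = Cp")
    case True
    then show ?thesis using that S12 by blast
  next
    case False
    then show ?thesis using that S12 by blast
  qed
  then obtain q where q: "q \<in> C" "2 \<le> q" "q - 1 \<notin> C" "S' = insert (q - 1) (C - {q})"
    unfolding direct_left_shift_def by blast
  have qp: "q \<noteq> p" using q(4) S'(2) Cp_def by auto
  obtain k where k: "k < 2^i" "\<forall>y. cnt (enc_coalition i k) y \<le> cnt Cp y"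
    using W1[OF dw[OF dlsp]] by blast
  obtain l where l: "l < 2^i" "\<forall>y. cnt (enc_coalition i l) y \<le> cnt S' y"
    using W1[OF dw[OF S'(1)]] by blast
  have cCp: "cnt Cp y = cnt C y + (if y = p - 1 then 1 else 0)" for y
    unfolding Cp_def using cnt_shift[OF fin assms(4) _ assms(6)] assms(5) by simp
  have cS': "cnt S' y = cnt C y + (if y = q - 1 then 1 else 0)" for y
    unfolding q(4) using cnt_shift[OF fin q(1) _ q(3)] q(2) by simp
  have "\<not> (\<forall>y. cnt (enc_coalition i k) y \<le> cnt C y)"
    using W2[OF Csub k(1)] nw by blast
  then obtain y0 where y0: "\<not> cnt (enc_coalition i k) y0 \<le> cnt C y0" by blast
  have y0p: "y0 = p - 1"
  proof (rule ccontr)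
    assume "y0 \<noteq> p - 1"
    then have "cnt Cp y0 = cnt C y0" using cCp[of y0] by simp
    then show False using y0 k(2)[rule_format, of y0] by simp
  qed
  have "cnt (enc_coalition i k) (p - 1) \<le> cnt Cp (p - 1)" using k(2) by blast
  then have "cnt (enc_coalition i k) (p - 1) \<le> cnt C (p - 1) + 1" using cCp[of "p - 1"] by simp
  then have e1: "cnt (enc_coalition i k) (p - 1) = cnt C (p - 1) + 1"
    using y0 y0p by simp
  have ap: "a = cnt C (p - 1) + 1"
    using cnt_pred[OF fin, of p] assms(4,5,7) by (simp add: cnt_def)
  have e2: "cnt C (p - 1) = cnt C (p - 2)"
    using cnt_pred[OF fin, of "p - 1"] assms(5,6) by (simp add: numeral_2_eq_2)
  have ne2: "p - 2 \<noteq> p - 1" using assms(5) by simp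
  have "cnt (enc_coalition i k) (p - 2) \<le> cnt Cp (p - 2)" using k(2) by blast
  then have hk2: "cnt (enc_coalition i k) (p - 2) \<le> cnt C (p - 2)" using cCp[of "p - 2"] ne2 by simp
  have ne1: "p - 1 \<noteq> q - 1" using qp assms(5) q(2) by simp
  have "cnt (enc_coalition i l) (p - 1) \<le> cnt S' (p - 1)" using l(2) by blast
  then have hl: "cnt (enc_coalition i l) (p - 1) \<le> cnt C (p - 1)" using cS'[of "p - 1"] ne1 by simp
  have fk1: "cnt (enc_coalition i k) (p - 1) = (p - 1) div 2 + (if odd (p - 1) \<and> p - 1 \<in> enc_coalition i k then 1 else 0)"
    using enc_formula p4 by simp
  have fk2: "cnt (enc_coalition i k) (p - 2) = (p - 2) div 2 + (if odd (p - 2) \<and> p - 2 \<in> enc_coalition i k then 1 else 0)"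
    using enc_formula p4 by simp
  have fl1: "cnt (enc_coalition i l) (p - 1) = (p - 1) div 2 + (if odd (p - 1) \<and> p - 1 \<in> enc_coalition i l then 1 else 0)"
    using enc_formula p4 by simp
  show ?thesis
  proof (cases "odd (p - 1)")
    case False
    then have "cnt (enc_coalition i k) (p - 1) = (p - 1) div 2" "cnt (enc_coalition i l) (p - 1) = (p - 1) div 2"
      using fk1 fl1 by simp_all
    then have "cnt (enc_coalition i k) (p - 1) = cnt (enc_coalition i l) (p - 1)" by simp
    then have "cnt C (p - 1) + 1 \<le> cnt C (p - 1)" using e1 hl by simp
    then show ?thesis by simp
  next
    case True
    have "(p - 2) div 2 = (p - 1) div 2" "\<not> odd (p - 2)" using True assms(5) by presburger+
    then have "p - 1 \<in> enc_coalition i k"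
    proof -
      assume h: "(p - 2) div 2 = (p - 1) div 2" "\<not> odd (p - 2)"
      show ?thesis
      proof (rule ccontr)
        assume "p - 1 \<notin> enc_coalition i k"
        then have "cnt (enc_coalition i k) (p - 1) = cnt (enc_coalition i k) (p - 2)"
          using fk1 fk2 h assms(5) by simp
        then show False using e1 e2 hk2 by simp
      qed
    qed
    then have "a = (p - 1) div 2 + 1" using fk1 e1 ap True by simp
    moreover have "2 * ((p - 1) div 2) + 1 = p - 1" using True odd_two_times_div_two_succ by blast
    ultimately show ?thesis using assms(5) by linarith
  qed
qed

end
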